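(* Let $G$ be a non-supergraceful graph with $p$ nodes and $q$ edges having a node $u$ of degree $p-1$. Suppose there is a semitotal labeling $\varphi$ of $G$ such that $\varphi(u) = \mathrm{opt}(G)$ and $\mathrm{opt}(G)-1 \in N(\varphi) \cup E(\varphi)$, where $\mathrm{opt}(G) = p+q+q_0$. Then there is a semitotal labeling $\mu$ of $G$ such that $1 \in N(\mu)$.
   Context: Graphs are finite, simple, connected. For a labeling $\varphi: V(G) \to \mathbb{Z}_{>0}$ let $N(\varphi) = \{\varphi(x) : x \in V(G)\}$ and $E(\varphi) = \{|\varphi(x)-\varphi(y)| : xy \in E(G)\}$. A total labeling of a $(p,q)$-graph $G$ is a map $\varphi$ such that the $p$ node labels and the $q$ edge labels are pairwise distinct and $N(\varphi) \cup E(\varphi) = \{1,\dots,p+q\}$; $G$ is supergraceful if it has one, non-supergraceful otherwise. If $G$ is non-supergraceful, let $q_0 > 0$ be the least integer such that there is a labeling $\varphi$ with all $p$ node labels and $q$ edge labels pairwise distinct and $N(\varphi) \cup E(\varphi) \subseteq \{1,2,\dots,p+q+q_0\}$; such a $\varphi$ is a semitotal labeling, and $\mathrm{opt}(G) := p+q+q_0$. *)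

theory Defs
  imports Main
begin

definition simple_graph :: "'a set \<Rightarrow> 'a set set \<Rightarrow> bool" where
  "simple_graph V E \<longleftrightarrow> finite V \<and> (\<forall>e\<in>E. \<exists>x y. x \<in> V \<and> y \<in> V \<and> x \<noteq> y \<and> e = {x, y})"

definition adj :: "'a set set \<Rightarrow> 'a \<Rightarrow> 'a \<Rightarrow> bool" where
  "adj E x y \<longleftrightarrow> {x, y} \<in> E \<and> x \<noteq> y"

definition connected_graph :: "'a set \<Rightarrow> 'a set set \<Rightarrow> bool" where
  "connected_graph V E \<longleftrightarrow> simple_graph V E \<and> V \<noteq> {} \<and>
     (\<forall>x\<in>V. \<forall>y\<in>V. (adj E)\<^sup>*\<^sup>* x y)"

definition degree :: "'a set \<Rightarrow> 'a set set \<Rightarrow> 'a \<Rightarrow> nat" where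
  "degree V E u = card {v \<in> V. {u, v} \<in> E \<and> u \<noteq> v}"

definition elab :: "('a \<Rightarrow> nat) \<Rightarrow> 'a set \<Rightarrow> nat" where
  "elab \<phi> e = Max (\<phi> ` e) - Min (\<phi> ` e)"

definition Nlab :: "'a set \<Rightarrow> ('a \<Rightarrow> nat) \<Rightarrow> nat set" where
  "Nlab V \<phi> = \<phi> ` V"

definition Elab :: "'a set set \<Rightarrow> ('a \<Rightarrow> nat) \<Rightarrow> nat set" where
  "Elab E \<phi> = elab \<phi> ` E"

definition distinct_labeling :: "'a set \<Rightarrow> 'a set set \<Rightarrow> ('a \<Rightarrow> nat) \<Rightarrow> bool" where
  "distinct_labeling V E \<phi> \<longleftrightarrow> (\<forall>x\<in>V. 0 < \<phi> x) \<and> inj_on \<phi> V \<and> inj_on (elab \<phi>) E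
     \<and> Nlab V \<phi> \<inter> Elab E \<phi> = {}"

definition total_labeling :: "'a set \<Rightarrow> 'a set set \<Rightarrow> ('a \<Rightarrow> nat) \<Rightarrow> bool" where
  "total_labeling V E \<phi> \<longleftrightarrow> distinct_labeling V E \<phi> \<and>
     Nlab V \<phi> \<union> Elab E \<phi> = {1 .. card V + card E}"

definition supergraceful :: "'a set \<Rightarrow> 'a set set \<Rightarrow> bool" where
  "supergraceful V E \<longleftrightarrow> (\<exists>\<phi>. total_labeling V E \<phi>)"

definition q0 :: "'a set \<Rightarrow> 'a set set \<Rightarrow> nat" where
  "q0 V E = (LEAST k. 0 < k \<and> (\<exists>\<phi>. distinct_labeling V E \<phi> \<and>
       Nlab V \<phi> \<union> Elab E \<phi> \<subseteq> {1 .. card V + card E + k}))"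

definition opt :: "'a set \<Rightarrow> 'a set set \<Rightarrow> nat" where
  "opt V E = card V + card E + q0 V E"

definition semitotal_labeling :: "'a set \<Rightarrow> 'a set set \<Rightarrow> ('a \<Rightarrow> nat) \<Rightarrow> bool" where
  "semitotal_labeling V E \<phi> \<longleftrightarrow> distinct_labeling V E \<phi> \<and>
     Nlab V \<phi> \<union> Elab E \<phi> \<subseteq> {1 .. opt V E}"

end

theory Submission
  imports Defs
begin

lemma elab2: "elab f {a,b} = max (f a) (f b) - min (f a) (f b)"
  by (simp add: elab_def)

theorem theorem8p2:
  fixes V :: "'a set" and E :: "'a set set" and u :: 'a and \<phi> :: "'a \<Rightarrow> nat"
  assumes "connected_graph V E"
    and "\<not> supergraceful V E"
    and "u \<in> V" and "degree V E u = card V - 1"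
    and "semitotal_labeling V E \<phi>"
    and "\<phi> u = opt V E"
    and "opt V E - 1 \<in> Nlab V \<phi> \<union> Elab E \<phi>"
  shows "\<exists>\<mu>. semitotal_labeling V E \<mu> \<and> 1 \<in> Nlab V \<mu>"
proof -
  define M where "M = opt V E"
  have sg: "simple_graph V E" using assms(1) by (simp add: connected_graph_def)
  have finV: "finite V" using sg by (simp add: simple_graph_def)
  have edges: "\<And>e. e \<in> E \<Longrightarrow> \<exists>x y. x \<in> V \<and> y \<in> V \<and> x \<noteq> y \<and> e = {x, y}"
    using sg by (simp add: simple_graph_def)
  have dl: "distinct_labeling V E \<phi>" and rng: "Nlab V \<phi> \<union> Elab E \<phi> \<subseteq> {1..M}"
    using assms(5) by (auto simp: semitotal_labeling_def M_def)
  have pos: "\<And>x. x \<in> V \<Longrightarrow> 0 < \<phi> x" using dl by (simp add: distinct_labeling_def)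
  have injV: "inj_on \<phi> V" and injE: "inj_on (elab \<phi>) E"
    and disj: "Nlab V \<phi> \<inter> Elab E \<phi> = {}" using dl by (auto simp: distinct_labeling_def)
  have bnd: "\<And>x. x \<in> V \<Longrightarrow> \<phi> x \<le> M" using rng by (auto simp: Nlab_def)
  have ebnd: "\<And>e. e \<in> E \<Longrightarrow> 1 \<le> elab \<phi> e \<and> elab \<phi> e \<le> M" using rng by (auto simp: Elab_def)
  have uM: "\<phi> u = M" using assms(6) M_def by simp
  have lt: "\<And>x. x \<in> V \<Longrightarrow> x \<noteq> u \<Longrightarrow> \<phi> x < M"
  proof -
    fix x assume x: "x \<in> V" "x \<noteq> u"
    have "\<phi> x \<noteq> \<phi> u" using injV x assms(3) by (auto simp: inj_on_def)
    thus "\<phi> x < M" using bnd[OF x(1)] uM by simp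
  qed
  have adjall: "\<And>x. x \<in> V \<Longrightarrow> x \<noteq> u \<Longrightarrow> {u,x} \<in> E"
  proof -
    let ?S = "{v\<in>V. {u,v}\<in>E \<and> u\<noteq>v}"
    have sub: "?S \<subseteq> V - {u}" by auto
    have "card ?S = card (V - {u})" using assms(4) assms(3) finV by (simp add: degree_def)
    hence "?S = V - {u}" using sub finV by (meson card_subset_eq finite_Diff)
    thus "\<And>x. x \<in> V \<Longrightarrow> x \<noteq> u \<Longrightarrow> {u,x} \<in> E" by blast
  qed
  show ?thesis
  proof (cases "M - 1 \<in> Elab E \<phi>")
    case True
    then obtain e where e: "e \<in> E" "elab \<phi> e = M - 1" by (auto simp: Elab_def)
    then obtain x y where xy: "x \<in> V" "y \<in> V" "x \<noteq> y" "e = {x,y}" using edges by blast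
    have "M \<ge> 2" using ebnd[OF e(1)] e(2) by simp
    have "\<phi> x = 1 \<or> \<phi> y = 1"
      using e(2) xy bnd[of x] bnd[of y] pos[of x] pos[of y] \<open>M \<ge> 2\<close> by (auto simp: elab2)
    hence "1 \<in> Nlab V \<phi>" using xy unfolding Nlab_def by (metis image_eqI)
    thus ?thesis using assms(5) by blast
  next
    case False
    hence "M - 1 \<in> Nlab V \<phi>" using assms(7) M_def by simp
    then obtain v where v: "v \<in> V" "\<phi> v = M - 1" by (auto simp: Nlab_def)
    have "M > 0" using pos[OF assms(3)] uM by simp
    hence vu: "v \<noteq> u" using v uM by auto
    define \<mu> where "\<mu> = (\<lambda>x. if x = u then M else M - \<phi> x)"
    have mu_u: "\<And>x. x \<in> V \<Longrightarrow> x \<noteq> u \<Longrightarrow> elab \<mu> {u,x} = \<phi> x"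
    proof -
      fix x assume x: "x \<in> V" "x \<noteq> u"
      have "\<phi> x < M" using lt x by blast
      thus "elab \<mu> {u,x} = \<phi> x" using x unfolding \<mu>_def elab2 by (simp add: max_def min_def) linarith
    qed
    have phi_u: "\<And>x. x \<in> V \<Longrightarrow> x \<noteq> u \<Longrightarrow> elab \<phi> {u,x} = M - \<phi> x"
      using lt uM by (auto simp: elab2)
    have mu_o: "\<And>e. e \<in> E \<Longrightarrow> u \<notin> e \<Longrightarrow> elab \<mu> e = elab \<phi> e"
    proof -
      fix e assume "e \<in> E" "u \<notin> e"
      then obtain x y where xy: "x \<in> V" "y \<in> V" "x \<noteq> y" "e = {x,y}" "x \<noteq> u" "y \<noteq> u"
        using edges by blast
      show "elab \<mu> e = elab \<phi> e" using xy bnd[of x] bnd[of y] unfolding \<mu>_def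
        by (auto simp: elab2 max_def min_def)
    qed
    have ecases: "\<And>e. e \<in> E \<Longrightarrow> (\<exists>x\<in>V. x \<noteq> u \<and> e = {u,x}) \<or> u \<notin> e"
      using edges by fastforce
    have mu1: "1 \<in> Nlab V \<mu>" using v vu \<open>M > 0\<close> unfolding \<mu>_def Nlab_def by force
    have "semitotal_labeling V E \<mu>"
      unfolding semitotal_labeling_def distinct_labeling_def
    proof (intro conjI)
      show "\<forall>x\<in>V. 0 < \<mu> x" using lt \<open>M > 0\<close> unfolding \<mu>_def by auto
      show "inj_on \<mu> V"
      proof (rule inj_onI)
        fix x y assume "x \<in> V" "y \<in> V" "\<mu> x = \<mu> y"
        hence xy: "x \<in> V" "y \<in> V" "\<mu> x = \<mu> y" .
        show "x = y"
        proof (cases "x = u \<or> y = u")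
          case True
          thus ?thesis
          proof
            assume xu: "x = u"
            show ?thesis
            proof (rule ccontr)
              assume "x \<noteq> y"
              hence "y \<noteq> u" using xu by simp
              hence "M - \<phi> y = M" using xy xu unfolding \<mu>_def by simp
              thus False using pos[OF xy(2)] lt[OF xy(2) \<open>y \<noteq> u\<close>] by linarith
            qed
          next
            assume yu: "y = u"
            show ?thesis
            proof (rule ccontr)
              assume "x \<noteq> y"
              hence "x \<noteq> u" using yu by simp
              hence "M - \<phi> x = M" using xy yu unfolding \<mu>_def by simp
              thus False using pos[OF xy(1)] lt[OF xy(1) \<open>x \<noteq> u\<close>] by linarith
            qed
          qed
        next
          case False
          hence "M - \<phi> x = M - \<phi> y" using xy unfolding \<mu>_def by simp
          moreover have "\<phi> x < M" "\<phi> y < M" using lt xy False by auto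
          ultimately have "\<phi> x = \<phi> y" by linarith
          thus ?thesis using injV xy by (simp add: inj_on_def)
        qed
      qed
      show "inj_on (elab \<mu>) E"
      proof (rule inj_onI)
        fix e1 e2 assume e1: "e1 \<in> E" and e2: "e2 \<in> E" and eq: "elab \<mu> e1 = elab \<mu> e2"
        show "e1 = e2"
          using ecases[OF e1]
        proof
          assume "\<exists>x\<in>V. x \<noteq> u \<and> e1 = {u,x}"
          then obtain x where x: "x \<in> V" "x \<noteq> u" "e1 = {u,x}" by blast
          show ?thesis using ecases[OF e2]
          proof
            assume "\<exists>y\<in>V. y \<noteq> u \<and> e2 = {u,y}"
            then obtain y where y: "y \<in> V" "y \<noteq> u" "e2 = {u,y}" by blast
            have "\<phi> x = \<phi> y" using eq x y mu_u by simp
            hence "x = y" using injV x y by (meson inj_onD)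
            thus ?thesis using x y by simp
          next
            assume "u \<notin> e2"
            hence "\<phi> x = elab \<phi> e2" using eq x mu_u mu_o e2 by simp
            hence False using disj x e2 by (auto simp: Nlab_def Elab_def)
            thus ?thesis ..
          qed
        next
          assume u1: "u \<notin> e1"
          show ?thesis using ecases[OF e2]
          proof
            assume "\<exists>y\<in>V. y \<noteq> u \<and> e2 = {u,y}"
            then obtain y where y: "y \<in> V" "y \<noteq> u" "e2 = {u,y}" by blast
            hence "\<phi> y = elab \<phi> e1" using eq u1 mu_u mu_o e1 by simp
            hence False using disj y e1 by (auto simp: Nlab_def Elab_def)
            thus ?thesis ..
          next
            assume "u \<notin> e2"
            thus ?thesis using eq u1 mu_o e1 e2 injE by (simp add: inj_on_def)
          qed
        qed
      qed
      show "Nlab V \<mu> \<inter> Elab E \<mu> = {}"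
      proof (rule ccontr)
        assume "Nlab V \<mu> \<inter> Elab E \<mu> \<noteq> {}"
        then obtain x e where x: "x \<in> V" and e: "e \<in> E" and eq: "\<mu> x = elab \<mu> e"
          by (auto simp: Nlab_def Elab_def)
        show False
        proof (cases "x = u")
          case True
          hence muM: "\<mu> x = M" unfolding \<mu>_def by simp
          show False using ecases[OF e]
          proof
            assume "\<exists>y\<in>V. y \<noteq> u \<and> e = {u,y}"
            then obtain y where y: "y \<in> V" "y \<noteq> u" "e = {u,y}" by blast
            thus False using eq muM mu_u lt by fastforce
          next
            assume "u \<notin> e"
            hence "elab \<phi> e = M" using eq muM mu_o e by simp
            obtain a b where ab: "a \<in> V" "b \<in> V" "a \<noteq> b" "e = {a,b}" using edges e by blast
            have "elab \<phi> e \<le> M - 1" using ab bnd[of a] bnd[of b] pos[of a] pos[of b]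
              by (auto simp: elab2)
            thus False using \<open>elab \<phi> e = M\<close> \<open>M > 0\<close> by simp
          qed
        next
          case False
          hence mux: "\<mu> x = elab \<phi> {u,x}" using phi_u x unfolding \<mu>_def by simp
          have eux: "{u,x} \<in> E" using adjall x False by simp
          show False using ecases[OF e]
          proof
            assume "\<exists>y\<in>V. y \<noteq> u \<and> e = {u,y}"
            then obtain y where y: "y \<in> V" "y \<noteq> u" "e = {u,y}" by blast
            hence "elab \<phi> {u,x} = \<phi> y" using eq mux mu_u by simp
            thus False using disj y eux by (auto simp: Nlab_def Elab_def)
          next
            assume "u \<notin> e"
            hence "elab \<phi> {u,x} = elab \<phi> e" using eq mux mu_o e by simp
            hence "{u,x} = e" using injE eux e by (simp add: inj_on_def)
            thus False using \<open>u \<notin> e\<close> by blast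
          qed
        qed
      qed
      show "Nlab V \<mu> \<union> Elab E \<mu> \<subseteq> {1..opt V E}"
      proof
        fix n assume "n \<in> Nlab V \<mu> \<union> Elab E \<mu>"
        then consider (N) x where "x \<in> V" "n = \<mu> x" | (Ed) e where "e \<in> E" "n = elab \<mu> e"
          by (auto simp: Nlab_def Elab_def)
        thus "n \<in> {1..opt V E}"
        proof cases
          case N thus ?thesis using lt \<open>M > 0\<close> pos M_def unfolding \<mu>_def by force
        next
          case Ed
          show ?thesis using ecases[OF Ed(1)]
          proof
            assume "\<exists>y\<in>V. y \<noteq> u \<and> e = {u,y}"
            then obtain y where y: "y \<in> V" "y \<noteq> u" "e = {u,y}" by blast
            thus ?thesis using Ed mu_u pos bnd M_def by fastforce
          next
            assume "u \<notin> e"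
            thus ?thesis using Ed mu_o ebnd M_def by fastforce
          qed
        qed
      qed
    qed
    thus ?thesis using mu1 by blast
  qed
qed

end
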